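(* Let $X$ be a finite set, $\mathbb{F}$ a field, $n\ge 2$, and let $F:X^n\to\mathbb{F}$ be a diagonal tensor, i.e. \[ F(x_1,\dots,x_n)=\sum_{a\in A}c_a\,\delta_a(x_1)\cdots\delta_a(x_n) \] for some $A\subset X$ and constants $c_a\ne 0$ for all $a\in A$, where $\delta_a(x)=1$ if $x=a$ and $0$ otherwise. Then the partition rank of $F$ equals $|A|$.
   Context: Let $X_1,\dots,X_n$ be finite sets and $\mathbb{F}$ a field. For $S=\{s_1<\dots<s_m\}\subset\{1,\dots,n\}$ write $\vec x_S=(x_{s_1},\dots,x_{s_m})$. A partition of $\{1,\dots,n\}$ is a collection of nonempty pairwise disjoint subsets whose union is $\{1,\dots,n\}$; it is trivial if it consists of the single set $\{1,\dots,n\}$. A function $h:X_1\times\cdots\times X_n\to\mathbb{F}$ has partition rank $1$ if there is a non-trivial partition $P$ of $\{1,\dots,n\}$ and functions $f_B$ ($B\in P$) with $h(x_1,\dots,x_n)=\prod_{B\in P}f_B(\vec x_B)$. The partition rank of $F:X_1\times\cdots\times X_n\to\mathbb{F}$ is the minimal $r$ such that $F$ is a sum of $r$ functions of partition rank $1$ (the zero function has partition rank $0$). *)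

theory Defs
  imports "HOL-Library.FuncSet"
begin

(* Points of X_1 x ... x X_n are encoded as extensional functions
  x \<in> {0..<n} ->E X (index set {0..<n} instead of {1..n}).
  A function on the product is a function (nat \<Rightarrow> 'a) \<Rightarrow> 'f, of which
  only the values on this set matter. *)

definition is_partition :: "nat set \<Rightarrow> nat set set \<Rightarrow> bool" where
  "is_partition I P \<longleftrightarrow> (\<forall>B\<in>P. B \<noteq> {}) \<and>
     (\<forall>B\<in>P. \<forall>C\<in>P. B \<noteq> C \<longrightarrow> B \<inter> C = {}) \<and> \<Union>P = I"

definition nontrivial_partition :: "nat set \<Rightarrow> nat set set \<Rightarrow> bool" where
  "nontrivial_partition I P \<longleftrightarrow> is_partition I P \<and> P \<noteq> {I}"

definition prank_one ::
  "nat \<Rightarrow> (nat \<Rightarrow> 'a set) \<Rightarrow> ((nat \<Rightarrow> 'a) \<Rightarrow> 'f::field) \<Rightarrow> bool" where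
  "prank_one n Xs h \<longleftrightarrow> (\<exists>P f. nontrivial_partition {0..<n} P \<and>
      (\<forall>x\<in>PiE {0..<n} Xs. h x = (\<Prod>B\<in>P. f B (restrict x B))))"

definition has_prank_le ::
  "nat \<Rightarrow> (nat \<Rightarrow> 'a set) \<Rightarrow> ((nat \<Rightarrow> 'a) \<Rightarrow> 'f::field) \<Rightarrow> nat \<Rightarrow> bool" where
  "has_prank_le n Xs F r \<longleftrightarrow> (\<exists>h :: nat \<Rightarrow> (nat \<Rightarrow> 'a) \<Rightarrow> 'f.
      (\<forall>i<r. prank_one n Xs (h i)) \<and>
      (\<forall>x\<in>PiE {0..<n} Xs. F x = (\<Sum>i<r. h i x)))"

definition partition_rank ::
  "nat \<Rightarrow> (nat \<Rightarrow> 'a set) \<Rightarrow> ((nat \<Rightarrow> 'a) \<Rightarrow> 'f::field) \<Rightarrow> nat" where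
  "partition_rank n Xs F = (LEAST r. has_prank_le n Xs F r)"

definition delta :: "'a \<Rightarrow> 'a \<Rightarrow> 'f::field" where
  "delta a x = (if x = a then 1 else 0)"

end

theory Submission
  imports Defs
begin

lemma exists_v:
  fixes g :: "'j \<Rightarrow> 'a \<Rightarrow> 'f::field"
  assumes "finite J" "finite A"
  shows "\<exists>v. (\<forall>j\<in>J. (\<Sum>a\<in>A. v a * g j a) = 0) \<and> card A \<le> card {a\<in>A. v a \<noteq> 0} + card J"
  using assms
proof (induction J arbitrary: A g rule: finite_induct)
  case empty
  show ?case by (rule exI[of _ "\<lambda>_. 1"]) simp
next
  case (insert j J)
  show ?case
  proof (cases "\<forall>a\<in>A. g j a = 0")
    case True
    from insert.IH[OF insert.prems, of g] obtain v where v: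
      "\<forall>j\<in>J. (\<Sum>a\<in>A. v a * g j a) = 0" "card A \<le> card {a\<in>A. v a \<noteq> 0} + card J" by blast
    show ?thesis
      by (rule exI[of _ v]) (use v True insert.hyps in auto)
  next
    case False
    then obtain a0 where a0: "a0 \<in> A" "g j a0 \<noteq> 0" by blast
    define g' where "g' i a = g i a - g i a0 * g j a / g j a0" for i a
    from insert.IH[of "A - {a0}" g'] insert.prems obtain v' where v':
      "\<forall>i\<in>J. (\<Sum>a\<in>A - {a0}. v' a * g' i a) = 0"
      "card (A - {a0}) \<le> card {a\<in>A - {a0}. v' a \<noteq> 0} + card J" by auto
    define s where "s = (\<Sum>b\<in>A - {a0}. v' b * g j b)"
    define v where "v a = (if a = a0 then - s / g j a0 else v' a)" for a
    have split: "(\<Sum>a\<in>A. v a * g i a) = v a0 * g i a0 + (\<Sum>a\<in>A - {a0}. v' a * g i a)" for i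
    proof -
      have "(\<Sum>a\<in>A. v a * g i a) = v a0 * g i a0 + (\<Sum>a\<in>A - {a0}. v a * g i a)"
        using a0 insert.prems by (simp add: sum.remove)
      also have "(\<Sum>a\<in>A - {a0}. v a * g i a) = (\<Sum>a\<in>A - {a0}. v' a * g i a)"
        by (rule sum.cong) (auto simp: v_def)
      finally show ?thesis .
    qed
    have c1: "(\<Sum>a\<in>A. v a * g j a) = 0"
      unfolding split using a0 by (simp add: v_def s_def)
    have c2: "(\<Sum>a\<in>A. v a * g i a) = 0" if "i \<in> J" for i
    proof -
      have "0 = (\<Sum>a\<in>A - {a0}. v' a * g' i a)" using v' that by auto
      also have "\<dots> = (\<Sum>a\<in>A - {a0}. v' a * g i a) - (g i a0 / g j a0) * s"
        unfolding g'_def s_def by (simp add: sum_subtractf sum_distrib_left algebra_simps)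
      finally have e: "(\<Sum>a\<in>A - {a0}. v' a * g i a) = (g i a0 / g j a0) * s" by simp
      show ?thesis unfolding split e using a0 by (simp add: v_def field_simps)
    qed
    have sub: "{a\<in>A - {a0}. v' a \<noteq> 0} \<subseteq> {a\<in>A. v a \<noteq> 0}" by (auto simp: v_def)
    have "card {a\<in>A - {a0}. v' a \<noteq> 0} \<le> card {a\<in>A. v a \<noteq> 0}"
      by (rule card_mono[OF _ sub]) (use insert.prems in auto)
    moreover have "card (A - {a0}) = card A - 1" using a0 by simp
    moreover have "card A \<ge> 1" using a0 insert.prems by (metis One_nat_def Suc_leI card_gt_0_iff empty_iff)
    ultimately have "card A \<le> card {a\<in>A. v a \<noteq> 0} + card (insert j J)"
      using v'(2) insert.hyps by simp
    then show ?thesis using c1 c2 by blast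
  qed
qed

lemma part_finite: "is_partition I P \<Longrightarrow> finite I \<Longrightarrow> finite P"
proof -
  assume "is_partition I P" "finite I"
  then have "finite (\<Union>P)" unfolding is_partition_def by simp
  then show "finite P" by (rule finite_UnionD)
qed

lemma upd_PiE: "y \<in> PiE {0..<n} (\<lambda>_. X) \<Longrightarrow> t \<in> X \<Longrightarrow> y(n := t) \<in> PiE {0..<Suc n} (\<lambda>_. X)"
proof -
  assume "y \<in> PiE {0..<n} (\<lambda>_. X)" "t \<in> X"
  then have "y(n := t) \<in> PiE (insert n {0..<n}) (\<lambda>_. X)" by (rule PiE_fun_upd[rotated])
  moreover have "insert n {0..<n} = {0..<Suc n}" by auto
  ultimately show ?thesis by simp
qed

lemma L1:
  fixes h :: "(nat \<Rightarrow> 'a) \<Rightarrow> 'f::field"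
  assumes P: "nontrivial_partition {0..<Suc n} P"
    and hP: "\<forall>x\<in>PiE {0..<Suc n} (\<lambda>_. X). h x = (\<Prod>B\<in>P. f B (restrict x B))"
    and n: "{n} \<in> P"
  shows "\<exists>g R. \<forall>y\<in>PiE {0..<n} (\<lambda>_. X). \<forall>t\<in>X. h (y(n:=t)) = g t * R y"
proof (intro exI ballI)
  fix y t assume y: "y \<in> PiE {0..<n} (\<lambda>_. X)" and t: "t \<in> X"
  have fin: "finite P" using P part_finite unfolding nontrivial_partition_def by blast
  have disj: "\<forall>B\<in>P. \<forall>C\<in>P. B \<noteq> C \<longrightarrow> B \<inter> C = {}" using P
    unfolding nontrivial_partition_def is_partition_def by blast
  have e1: "h (y(n:=t)) = (\<Prod>B\<in>P. f B (restrict (y(n:=t)) B))" by (rule bspec[OF hP upd_PiE[OF y t]])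
  have e2: "(\<Prod>B\<in>P. f B (restrict (y(n:=t)) B)) = f {n} (restrict (y(n:=t)) {n}) * (\<Prod>B\<in>P - {{n}}. f B (restrict (y(n:=t)) B))"
    by (rule prod.remove[OF fin n])
  have e3: "restrict (y(n:=t)) {n} = restrict (\<lambda>_. t) {n}" by (rule restrict_ext) simp
  have e4: "(\<Prod>B\<in>P - {{n}}. f B (restrict (y(n:=t)) B)) = (\<Prod>B\<in>P - {{n}}. f B (restrict y B))"
  proof (rule prod.cong)
    fix B assume B: "B \<in> P - {{n}}"
    then have "B \<inter> {n} = {}" using disj[rule_format, of B "{n}"] n by blast
    then have nB: "n \<notin> B" by blast
    have "restrict (y(n:=t)) B = restrict y B"
      by (rule restrict_ext) (use nB in auto)
    then show "f B (restrict (y(n:=t)) B) = f B (restrict y B)" by simp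
  qed simp
  show "h (y(n:=t)) = (\<lambda>t. f {n} (restrict (\<lambda>_. t) {n})) t * (\<lambda>y. \<Prod>B\<in>P - {{n}}. f B (restrict y B)) y"
    using e1 e2 e3 e4 by simp
qed

lemma L2:
  fixes h :: "(nat \<Rightarrow> 'a) \<Rightarrow> 'f::field"
  assumes P: "nontrivial_partition {0..<Suc n} P"
    and hP: "\<forall>x\<in>PiE {0..<Suc n} (\<lambda>_. X). h x = (\<Prod>B\<in>P. f B (restrict x B))"
    and n: "{n} \<notin> P" and n1: "n \<ge> 1"
  shows "prank_one n (\<lambda>_. X) (\<lambda>y. \<Sum>t\<in>X. v t * h (y(n:=t)))"
proof -
  have fin: "finite P" using P part_finite unfolding nontrivial_partition_def by blast
  have ne: "\<forall>B\<in>P. B \<noteq> {}" and disj: "\<forall>B\<in>P. \<forall>C\<in>P. B \<noteq> C \<longrightarrow> B \<inter> C = {}"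
    and un: "\<Union>P = {0..<Suc n}" and nt: "P \<noteq> {{0..<Suc n}}"
    using P unfolding nontrivial_partition_def is_partition_def by blast+
  obtain B where B: "B \<in> P" "n \<in> B" using un by (metis UnionE atLeastLessThan_iff lessI zero_le)
  have nD: "n \<notin> D" if "D \<in> P" "D \<noteq> B" for D
  proof -
    have "D \<inter> B = {}" using disj that B(1) by metis
    then show ?thesis using B(2) by blast
  qed
  define B' where "B' = B - {n}"
  have B'ne: "B' \<noteq> {}"
  proof -
    have "B \<noteq> {n}" using B(1) n by metis
    then show ?thesis using B(2) unfolding B'_def by blast
  qed
  have B'notin: "B' \<notin> P - {B}"
  proof
    assume "B' \<in> P - {B}"
    then have "B' \<in> P" "B' \<noteq> B" by auto
    then have "B \<inter> B' = {}" using disj[rule_format, of B B'] B(1) by metis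
    then show False using B'ne unfolding B'_def by blast
  qed
  define P' where "P' = insert B' (P - {B})"
  define f' where "f' D = (if D = B' then (\<lambda>z. \<Sum>t\<in>X. v t * f B (z(n := t))) else f D)" for D
  have "P \<noteq> {B}" using nt un by auto
  then obtain C where C: "C \<in> P" "C \<noteq> B" using B by blast
  have part: "nontrivial_partition {0..<n} P'"
    unfolding nontrivial_partition_def is_partition_def
  proof (intro conjI)
    show "\<forall>D\<in>P'. D \<noteq> {}" using ne B'ne unfolding P'_def by blast
    show "\<forall>D\<in>P'. \<forall>E\<in>P'. D \<noteq> E \<longrightarrow> D \<inter> E = {}"
    proof (intro ballI impI)
      fix D E assume D: "D \<in> P'" and E: "E \<in> P'" and DE: "D \<noteq> E"
      have Bd: "B' \<inter> F = {}" if "F \<in> P - {B}" for F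
      proof -
        have "F \<in> P" "B \<noteq> F" using that by auto
        then have "B \<inter> F = {}" using disj[rule_format, of B F] B(1) by metis
        then show ?thesis unfolding B'_def by blast
      qed
      show "D \<inter> E = {}"
      proof (cases "D = B'")
        case True
        then have "E \<in> P - {B}" using E DE unfolding P'_def by blast
        then show ?thesis using Bd True by blast
      next
        case False
        then have D': "D \<in> P - {B}" using D unfolding P'_def by blast
        show ?thesis
        proof (cases "E = B'")
          case True then show ?thesis using Bd[OF D'] by blast
        next
          case False
          then have "E \<in> P - {B}" using E unfolding P'_def by blast
          then show ?thesis using D' disj[rule_format, of D E] DE by blast
        qed
      qed
    qed
    show "\<Union>P' = {0..<n}"
    proof
      show "\<Union>P' \<subseteq> {0..<n}"
      proof
        fix k assume "k \<in> \<Union>P'"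
        then obtain D where D: "D \<in> P'" "k \<in> D" by blast
        show "k \<in> {0..<n}"
        proof (cases "D = B'")
          case True
          then have "k \<in> B" "k \<noteq> n" using D unfolding B'_def by auto
          moreover have "B \<subseteq> {0..<Suc n}" using un B by blast
          ultimately show ?thesis by auto
        next
          case False
          then have "D \<in> P" "D \<noteq> B" using D unfolding P'_def by auto
          moreover have "D \<subseteq> {0..<Suc n}" using un calculation by blast
          ultimately have "k \<in> {0..<Suc n}" "k \<noteq> n" using nD D by auto
          then show ?thesis by auto
        qed
      qed
      show "{0..<n} \<subseteq> \<Union>P'"
      proof
        fix k assume k: "k \<in> {0..<n}"
        then obtain D where "D \<in> P" "k \<in> D" using un by (metis UnionE atLeastLessThan_iff less_SucI)
        then show "k \<in> \<Union>P'" using k unfolding P'_def B'_def by (cases "D = B") auto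
      qed
    qed
    show "P' \<noteq> {{0..<n}}"
    proof
      assume a: "P' = {{0..<n}}"
      have "C \<in> P'" "B' \<in> P'" using C unfolding P'_def by auto
      then have "C = {0..<n}" "B' = {0..<n}" using a by auto
      then have "0 \<in> C" "0 \<in> B'" using n1 by auto
      then have "0 \<in> B \<inter> C" unfolding B'_def by blast
      then show False using disj[rule_format, of B C] B(1) C by blast
    qed
  qed
  have "\<forall>y\<in>PiE {0..<n} (\<lambda>_. X). (\<Sum>t\<in>X. v t * h (y(n:=t))) = (\<Prod>D\<in>P'. f' D (restrict y D))"
  proof
    fix y assume y: "y \<in> PiE {0..<n} (\<lambda>_. X)"
    define R where "R = (\<Prod>D\<in>P - {B}. f D (restrict y D))"
    have "h (y(n:=t)) = f B (restrict (y(n:=t)) B) * R" if t: "t \<in> X" for t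
    proof -
      have "h (y(n:=t)) = (\<Prod>D\<in>P. f D (restrict (y(n:=t)) D))" by (rule bspec[OF hP upd_PiE[OF y t]])
      also have "\<dots> = f B (restrict (y(n:=t)) B) * (\<Prod>D\<in>P - {B}. f D (restrict (y(n:=t)) D))"
        by (rule prod.remove[OF fin B(1)])
      also have "(\<Prod>D\<in>P - {B}. f D (restrict (y(n:=t)) D)) = R"
        unfolding R_def
      proof (rule prod.cong)
        fix D assume "D \<in> P - {B}"
        then have "n \<notin> D" using nD by blast
        then have "restrict (y(n:=t)) D = restrict y D" by (intro restrict_ext) auto
        then show "f D (restrict (y(n:=t)) D) = f D (restrict y D)" by simp
      qed simp
      finally show ?thesis .
    qed
    then have "(\<Sum>t\<in>X. v t * h (y(n:=t))) = (\<Sum>t\<in>X. v t * f B (restrict (y(n:=t)) B)) * R"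
      by (simp add: sum_distrib_right mult.assoc)
    also have "(\<Sum>t\<in>X. v t * f B (restrict (y(n:=t)) B)) = (\<Sum>t\<in>X. v t * f B ((restrict y B')(n := t)))"
    proof (rule sum.cong)
      fix t
      have "restrict (y(n:=t)) B = (restrict y B')(n := t)"
        using B unfolding B'_def by (auto simp: restrict_def fun_eq_iff)
      then show "v t * f B (restrict (y(n:=t)) B) = v t * f B ((restrict y B')(n := t))" by simp
    qed simp
    also have "(\<Sum>t\<in>X. v t * f B ((restrict y B')(n := t))) = f' B' (restrict y B')"
      by (simp add: f'_def)
    also have "R = (\<Prod>D\<in>P - {B}. f' D (restrict y D))"
      unfolding R_def using B'notin by (intro prod.cong) (auto simp: f'_def)
    also have "f' B' (restrict y B') * (\<Prod>D\<in>P - {B}. f' D (restrict y D)) = (\<Prod>D\<in>P'. f' D (restrict y D))"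
      unfolding P'_def using fin B'notin by simp
    finally show "(\<Sum>t\<in>X. v t * h (y(n:=t))) = (\<Prod>D\<in>P'. f' D (restrict y D))" .
  qed
  then have hq: "\<forall>y\<in>PiE {0..<n} (\<lambda>_. X). (\<Sum>t\<in>X. v t * h (y(n:=t))) = (\<Prod>D\<in>P'. f' D (restrict y D))" .
  show ?thesis unfolding prank_one_def
    by (rule exI[of _ P'], rule exI[of _ f'], rule conjI[OF part hq])
qed

lemma prod_upd:
  "(\<Prod>k<Suc n. delta a ((y(n:=t)) k) :: 'f::field) = (\<Prod>k<n. delta a (y k)) * delta a t"
proof -
  have "(\<Prod>k<Suc n. delta a ((y(n:=t)) k) :: 'f) = (\<Prod>k<n. delta a ((y(n:=t)) k)) * delta a ((y(n:=t)) n)"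
    by (rule prod.lessThan_Suc)
  also have "(\<Prod>k<n. delta a ((y(n:=t)) k) :: 'f) = (\<Prod>k<n. delta a (y k))"
    by (rule prod.cong) auto
  finally show ?thesis by simp
qed

lemma lower:
  fixes h :: "'j \<Rightarrow> (nat \<Rightarrow> 'a) \<Rightarrow> 'f::field"
  assumes "n \<ge> 1" "finite I" "A \<subseteq> X" "finite X" "\<forall>a\<in>A. c a \<noteq> 0"
    "\<forall>i\<in>I. prank_one n (\<lambda>_. X) (h i)"
    "\<forall>x\<in>PiE {0..<n} (\<lambda>_. X). (\<Sum>a\<in>A. c a * (\<Prod>k<n. delta a (x k))) = (\<Sum>i\<in>I. h i x)"
  shows "card A \<le> card I"
  using assms
proof (induction n arbitrary: I h A c)
  case 0 then show ?case by simp
next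
  case (Suc n I h A c)
  note hyp = Suc.prems
  have finA: "finite A" using finite_subset[OF hyp(3) hyp(4)] .
  show ?case
  proof (cases "n = 0")
    case True
    have noP: "\<not> prank_one (Suc 0) (\<lambda>_. X) g" for g :: "(nat \<Rightarrow> 'a) \<Rightarrow> 'f"
    proof
      assume "prank_one (Suc 0) (\<lambda>_. X) g"
      then obtain P where P: "nontrivial_partition {0..<Suc 0} P" unfolding prank_one_def by blast
      then have ne: "\<forall>B\<in>P. B \<noteq> {}" and un: "\<Union>P = {0}" and nt: "P \<noteq> {{0}}"
        unfolding nontrivial_partition_def is_partition_def by auto
      have Beq: "B = {0}" if "B \<in> P" for B
      proof -
        have "B \<subseteq> {0}" using un that by (metis Union_upper)
        moreover have "B \<noteq> {}" using ne that by blast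
        ultimately show ?thesis by (simp add: subset_singleton_iff)
      qed
      have "P \<noteq> {}" using un by auto
      moreover have "P \<subseteq> {{0}}" using Beq by blast
      ultimately have "P = {{0}}" by (simp add: subset_singleton_iff)
      then show False using nt by simp
    qed
    have "I = {}"
    proof (rule ccontr)
      assume "I \<noteq> {}"
      then obtain i where "i \<in> I" by blast
      then have "prank_one (Suc n) (\<lambda>_. X) (h i)" using hyp(6) by (rule bspec[rotated])
      then show False using noP True by simp
    qed
    have "A = {}"
    proof (rule ccontr)
      assume "A \<noteq> {}"
      then obtain a where a: "a \<in> A" by blast
      define x where "x = (\<lambda>k::nat. if k = 0 then a else undefined)"
      have "x \<in> PiE {0..<Suc 0} (\<lambda>_. X)" using a hyp(3) by (auto simp: x_def PiE_def extensional_def)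
      then have "(\<Sum>b\<in>A. c b * (\<Prod>k<Suc 0. delta b (x k))) = 0"
        using hyp(7) True \<open>I = {}\<close> by simp
      moreover have "(\<Sum>b\<in>A. c b * (\<Prod>k<Suc 0. delta b (x k))) = c a"
      proof -
        have "(\<lambda>b. c b * (\<Prod>k<Suc 0. delta b (x k))) = (\<lambda>b. if b = a then c b else 0)"
          by (rule ext) (simp add: x_def delta_def)
        then have "(\<Sum>b\<in>A. c b * (\<Prod>k<Suc 0. delta b (x k))) = (\<Sum>b\<in>A. if b = a then c b else 0)"
          by (rule arg_cong[where f="\<lambda>f. sum f A"])
        also have "\<dots> = c a" using a finA by simp
        finally show ?thesis .
      qed
      ultimately show False using a hyp(5) by simp
    qed
    then show ?thesis by simp
  next
    case False
    then have n1: "n \<ge> 1" by simp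
    have "\<forall>i\<in>I. \<exists>P f. nontrivial_partition {0..<Suc n} P \<and>
        (\<forall>x\<in>PiE {0..<Suc n} (\<lambda>_. X). h i x = (\<Prod>B\<in>P. f B (restrict x B)))"
      using hyp(6) unfolding prank_one_def by simp
    then have "\<exists>P. \<forall>i\<in>I. \<exists>f. nontrivial_partition {0..<Suc n} (P i) \<and>
        (\<forall>x\<in>PiE {0..<Suc n} (\<lambda>_. X). h i x = (\<Prod>B\<in>P i. f B (restrict x B)))"
      by (rule bchoice)
    then obtain P where "\<forall>i\<in>I. \<exists>f. nontrivial_partition {0..<Suc n} (P i) \<and>
        (\<forall>x\<in>PiE {0..<Suc n} (\<lambda>_. X). h i x = (\<Prod>B\<in>P i. f B (restrict x B)))"
      by (elim exE)
    then have "\<exists>f. \<forall>i\<in>I. nontrivial_partition {0..<Suc n} (P i) \<and>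
        (\<forall>x\<in>PiE {0..<Suc n} (\<lambda>_. X). h i x = (\<Prod>B\<in>P i. f i B (restrict x B)))"
      by (rule bchoice)
    then obtain f where Pf: "\<forall>i\<in>I. nontrivial_partition {0..<Suc n} (P i) \<and>
        (\<forall>x\<in>PiE {0..<Suc n} (\<lambda>_. X). h i x = (\<Prod>B\<in>P i. f i B (restrict x B)))"
      by (elim exE)
    define J where "J = {i\<in>I. {n} \<in> P i}"
    have JI: "J \<subseteq> I" and finJ: "finite J" using hyp(2) by (auto simp: J_def)
    have "\<forall>i\<in>J. \<exists>g R. \<forall>y\<in>PiE {0..<n} (\<lambda>_. X). \<forall>t\<in>X. h i (y(n:=t)) = g t * R y"
    proof
      fix i assume i: "i \<in> J"
      then have "i \<in> I" "{n} \<in> P i" by (auto simp: J_def)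
      moreover have "nontrivial_partition {0..<Suc n} (P i) \<and>
        (\<forall>x\<in>PiE {0..<Suc n} (\<lambda>_. X). h i x = (\<Prod>B\<in>P i. f i B (restrict x B)))"
        using Pf calculation(1) by (rule bspec)
      ultimately show "\<exists>g R. \<forall>y\<in>PiE {0..<n} (\<lambda>_. X). \<forall>t\<in>X. h i (y(n:=t)) = g t * R y"
        by (intro L1[of n "P i" X "h i" "f i"]) simp_all
    qed
    then have "\<exists>g. \<forall>i\<in>J. \<exists>R. \<forall>y\<in>PiE {0..<n} (\<lambda>_. X). \<forall>t\<in>X. h i (y(n:=t)) = g i t * R y"
      by (rule bchoice)
    then obtain g where "\<forall>i\<in>J. \<exists>R. \<forall>y\<in>PiE {0..<n} (\<lambda>_. X). \<forall>t\<in>X. h i (y(n:=t)) = g i t * R y"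
      by (elim exE)
    then have "\<exists>R. \<forall>i\<in>J. \<forall>y\<in>PiE {0..<n} (\<lambda>_. X). \<forall>t\<in>X. h i (y(n:=t)) = g i t * R i y"
      by (rule bchoice)
    then obtain R where gR: "\<forall>i\<in>J. \<forall>y\<in>PiE {0..<n} (\<lambda>_. X). \<forall>t\<in>X. h i (y(n:=t)) = g i t * R i y"
      by (elim exE)
    obtain v where v: "\<forall>j\<in>J. (\<Sum>a\<in>A. v a * g j a) = 0"
      "card A \<le> card {a\<in>A. v a \<noteq> 0} + card J"
      using exists_v[OF finJ finA, of g] by blast
    define v0 where "v0 t = (if t \<in> A then v t else 0)" for t
    define h' where "h' i y = (\<Sum>t\<in>X. v0 t * h i (y(n:=t)))" for i y
    define A' where "A' = {a\<in>A. v a \<noteq> 0}"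
    define c' where "c' a = c a * v a" for a
    have sumX: "(\<Sum>t\<in>X. v0 t * w t) = (\<Sum>t\<in>A. v t * w t)" for w :: "'a \<Rightarrow> 'f"
    proof -
      have "(\<Sum>t\<in>X. v0 t * w t) = (\<Sum>t\<in>A. v0 t * w t)"
        by (rule sum.mono_neutral_right) (use hyp(3,4) in \<open>auto simp: v0_def\<close>)
      also have "\<dots> = (\<Sum>t\<in>A. v t * w t)" by (rule sum.cong) (auto simp: v0_def)
      finally show ?thesis .
    qed
    have "card A' \<le> card (I - J)"
    proof (rule Suc.IH[of _ A' c' h'])
      show "1 \<le> n" by (rule n1)
      show "finite (I - J)" using hyp(2) by simp
      show "A' \<subseteq> X" using hyp(3) by (auto simp: A'_def)
      show "finite X" by (rule hyp(4))
      show "\<forall>a\<in>A'. c' a \<noteq> 0" using hyp(5) by (auto simp: A'_def c'_def)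
      show "\<forall>i\<in>I - J. prank_one n (\<lambda>_. X) (h' i)"
      proof
        fix i assume i: "i \<in> I - J"
        then have "{n} \<notin> P i" "i \<in> I" by (auto simp: J_def)
        moreover have "nontrivial_partition {0..<Suc n} (P i) \<and>
          (\<forall>x\<in>PiE {0..<Suc n} (\<lambda>_. X). h i x = (\<Prod>B\<in>P i. f i B (restrict x B)))"
          using Pf calculation(2) by (rule bspec)
        ultimately show "prank_one n (\<lambda>_. X) (h' i)"
          unfolding h'_def using n1 by (intro L2[of n "P i" X "h i" "f i" v0]) simp_all
      qed
      show "\<forall>x\<in>PiE {0..<n} (\<lambda>_. X). (\<Sum>a\<in>A'. c' a * (\<Prod>k<n. delta a (x k))) = (\<Sum>i\<in>I - J. h' i x)"
      proof
        fix y assume y: "y \<in> PiE {0..<n} (\<lambda>_. X)"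
        have J0: "h' i y = 0" if "i \<in> J" for i
        proof -
          have "h' i y = (\<Sum>t\<in>X. v0 t * (g i t * R i y))"
            unfolding h'_def using gR that y by (intro sum.cong) auto
          also have "\<dots> = (\<Sum>t\<in>A. v t * g i t) * R i y"
            by (simp add: sumX sum_distrib_right mult.assoc)
          finally show ?thesis using v(1) that by simp
        qed
        have "(\<Sum>i\<in>I. h' i y) = (\<Sum>t\<in>X. v0 t * (\<Sum>i\<in>I. h i (y(n:=t))))"
          unfolding h'_def by (subst sum.swap) (simp add: sum_distrib_left)
        also have "\<dots> = (\<Sum>t\<in>X. v0 t * (\<Sum>a\<in>A. c a * (\<Prod>k<Suc n. delta a ((y(n:=t)) k))))"
        proof (rule sum.cong[OF refl])
          fix t assume t: "t \<in> X"
          show "v0 t * (\<Sum>i\<in>I. h i (y(n:=t))) = v0 t * (\<Sum>a\<in>A. c a * (\<Prod>k<Suc n. delta a ((y(n:=t)) k)))"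
            using bspec[OF hyp(7) upd_PiE[OF y t]] by (simp only:)
        qed
        also have "\<dots> = (\<Sum>t\<in>A. v t * (\<Sum>a\<in>A. c a * ((\<Prod>k<n. delta a (y k)) * delta a t)))"
          by (simp add: sumX prod_upd)
        also have "\<dots> = (\<Sum>t\<in>A. \<Sum>a\<in>A. v t * (c a * ((\<Prod>k<n. delta a (y k)) * delta a t)))"
          by (simp add: sum_distrib_left)
        also have "\<dots> = (\<Sum>a\<in>A. \<Sum>t\<in>A. v t * (c a * ((\<Prod>k<n. delta a (y k)) * delta a t)))"
          by (rule sum.swap)
        also have "\<dots> = (\<Sum>a\<in>A. c a * (\<Prod>k<n. delta a (y k)) * (\<Sum>t\<in>A. v t * delta a t))"
          by (rule sum.cong) (simp_all add: sum_distrib_left ac_simps)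
        also have "\<dots> = (\<Sum>a\<in>A. c' a * (\<Prod>k<n. delta a (y k)))"
        proof (rule sum.cong)
          fix a assume a: "a \<in> A"
          have "(\<lambda>t. v t * delta a t) = (\<lambda>t. if t = a then v t else 0)"
            by (rule ext) (simp add: delta_def)
          then have "(\<Sum>t\<in>A. v t * delta a t) = (\<Sum>t\<in>A. if t = a then v t else 0)"
            by (rule arg_cong[where f="\<lambda>f. sum f A"])
          also have "\<dots> = v a" using a finA by simp
          finally have "(\<Sum>t\<in>A. v t * delta a t) = v a" .
          then show "c a * (\<Prod>k<n. delta a (y k)) * (\<Sum>t\<in>A. v t * delta a t) = c' a * (\<Prod>k<n. delta a (y k))"
            by (simp add: c'_def algebra_simps)
        qed simp
        also have "\<dots> = (\<Sum>a\<in>A'. c' a * (\<Prod>k<n. delta a (y k)))"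
          unfolding A'_def by (rule sum.mono_neutral_right) (use finA in \<open>auto simp: c'_def\<close>)
        finally have e: "(\<Sum>i\<in>I. h' i y) = (\<Sum>a\<in>A'. c' a * (\<Prod>k<n. delta a (y k)))" .
        have "(\<Sum>i\<in>I. h' i y) = (\<Sum>i\<in>I - J. h' i y) + (\<Sum>i\<in>J. h' i y)"
          by (rule sum.subset_diff[OF JI hyp(2)])
        also have "(\<Sum>i\<in>J. h' i y) = 0" using J0 by simp
        finally show "(\<Sum>a\<in>A'. c' a * (\<Prod>k<n. delta a (y k))) = (\<Sum>i\<in>I - J. h' i y)"
          using e by simp
      qed
    qed
    moreover have "card (I - J) = card I - card J" using JI finJ by (simp add: card_Diff_subset)
    moreover have "card J \<le> card I" using JI hyp(2) by (simp add: card_mono)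
    ultimately show ?thesis using v(2) unfolding A'_def by linarith
  qed
qed

lemma upper:
  fixes c :: "'a \<Rightarrow> 'f::field"
  assumes "finite A" "n \<ge> 2"
    and F: "\<forall>x\<in>PiE {0..<n} (\<lambda>_. X). F x = (\<Sum>a\<in>A. c a * (\<Prod>i<n. delta a (x i)))"
  shows "has_prank_le n (\<lambda>_. X) F (card A)"
proof -
  obtain e where e: "bij_betw e {0..<card A} A" using ex_bij_betw_nat_finite[OF assms(1)] by blast
  define h where "h i x = c (e i) * (\<Prod>k<n. delta (e i) (x k))" for i x
  have one: "prank_one n (\<lambda>_. X) (\<lambda>x. c a * (\<Prod>k<n. delta a (x k)))" for a
  proof -
    define P where "P = {{0::nat}, {1..<n}}"
    define f where "f B = (if B = {0::nat} then (\<lambda>z. c a * delta a (z 0))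
       else (\<lambda>z. \<Prod>k\<in>{1..<n}. delta a (z k)))" for B :: "nat set"
    have ne: "{1..<n} \<noteq> {0::nat}"
    proof
      assume "{1..<n} = {0::nat}"
      then have "(0::nat) \<in> {1..<n}" by simp
      then show False by simp
    qed
    have part: "nontrivial_partition {0..<n} P"
      unfolding nontrivial_partition_def is_partition_def P_def
    proof (intro conjI)
      have n1: "1 < n" using assms(2) by simp
      show "\<forall>B\<in>{{0}, {1..<n}}. B \<noteq> {}" using n1 by simp
      have d: "{0::nat} \<inter> {1..<n} = {}" by simp
      then have d2: "{1..<n} \<inter> {0::nat} = {}" by (simp only: Int_commute)
      show "\<forall>B\<in>{{0}, {1..<n}}. \<forall>C\<in>{{0}, {1..<n}}. B \<noteq> C \<longrightarrow> B \<inter> C = {}"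
        using d d2 by simp
      have "{0::nat} \<union> {1..<n} = {0..<n}"
      proof (rule set_eqI)
        fix k :: nat show "k \<in> {0} \<union> {1..<n} \<longleftrightarrow> k \<in> {0..<n}" using n1 by (cases k) simp_all
      qed
      then show "\<Union>{{0}, {1..<n}} = {0..<n}" by simp
      show "{{0}, {1..<n}} \<noteq> {{0..<n}}"
      proof
        assume eqP: "{{0::nat}, {1..<n}} = {{0..<n}}"
        have "{0::nat} \<in> {{0::nat}, {1..<n}}" by simp
        then have "{0::nat} \<in> {{0..<n}}" unfolding eqP .
        then have e1: "{0::nat} = {0..<n}" by simp
        have e2: "(1::nat) \<in> {0..<n}" using n1 by simp
        have "(1::nat) \<in> {0}" using e2 unfolding e1 .
        then show False by simp
      qed
    qed
    have eq: "c a * (\<Prod>k<n. delta a (x k)) = (\<Prod>B\<in>P. f B (restrict x B))" for x :: "nat \<Rightarrow> 'a"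
    proof -
      have "{..<n} = insert 0 {1..<n}" using assms(2) by auto
      then have "(\<Prod>k<n. delta a (x k)) = delta a (x 0) * (\<Prod>k\<in>{1..<n}. delta a (x k))"
        by simp
      moreover have "(\<Prod>k\<in>{1..<n}. delta a (restrict x {1..<n} k)) = (\<Prod>k\<in>{1..<n}. delta a (x k))"
        by (rule prod.cong) auto
      ultimately show ?thesis using ne unfolding P_def f_def by simp blast
    qed
    have hq: "\<forall>x\<in>PiE {0..<n} (\<lambda>_. X). c a * (\<Prod>k<n. delta a (x k)) = (\<Prod>B\<in>P. f B (restrict x B))"
      using eq by simp
    show ?thesis unfolding prank_one_def
      by (rule exI[of _ P], rule exI[of _ f], rule conjI[OF part hq])
  qed
  have "\<forall>i<card A. prank_one n (\<lambda>_. X) (h i)" unfolding h_def using one by simp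
  moreover have "\<forall>x\<in>PiE {0..<n} (\<lambda>_. X). F x = (\<Sum>i<card A. h i x)"
  proof
    fix x assume x: "x \<in> PiE {0..<n} (\<lambda>_. X)"
    have "F x = (\<Sum>a\<in>A. c a * (\<Prod>i<n. delta a (x i)))" by (rule bspec[OF F x])
    also have "\<dots> = (\<Sum>i\<in>{0..<card A}. h i x)"
      unfolding h_def by (rule sum.reindex_bij_betw[OF e, where g="\<lambda>a. c a * (\<Prod>k<n. delta a (x k))", symmetric])
    finally show "F x = (\<Sum>i<card A. h i x)" by (simp add: atLeast0LessThan)
  qed
  ultimately show ?thesis unfolding has_prank_le_def by (intro exI[of _ h] conjI)
qed

theorem lemma8:
  fixes X :: "'a set" and A :: "'a set" and c :: "'a \<Rightarrow> 'f::field"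
    and n :: nat and F :: "(nat \<Rightarrow> 'a) \<Rightarrow> 'f"
  assumes "finite X" and "n \<ge> 2" and "A \<subseteq> X"
    and "\<forall>a\<in>A. c a \<noteq> 0"
    and "\<forall>x\<in>PiE {0..<n} (\<lambda>_. X).
           F x = (\<Sum>a\<in>A. c a * (\<Prod>i<n. delta a (x i)))"
  shows "partition_rank n (\<lambda>_. X) F = card A"
  unfolding partition_rank_def
proof (rule Least_equality)
  have "finite A" using assms(1,3) finite_subset by blast
  then show "has_prank_le n (\<lambda>_. X) F (card A)" by (rule upper[OF _ assms(2,5)])
next
  fix r assume "has_prank_le n (\<lambda>_. X) F r"
  then obtain h :: "nat \<Rightarrow> (nat \<Rightarrow> 'a) \<Rightarrow> 'f" where h: "\<forall>i<r. prank_one n (\<lambda>_. X) (h i)"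
    "\<forall>x\<in>PiE {0..<n} (\<lambda>_. X). F x = (\<Sum>i<r. h i x)" unfolding has_prank_le_def by (elim exE conjE)
  have "card A \<le> card {..<r}"
  proof (rule lower[of n "{..<r}" A X c h])
    show "1 \<le> n" using assms(2) by simp
    show "\<forall>x\<in>PiE {0..<n} (\<lambda>_. X). (\<Sum>a\<in>A. c a * (\<Prod>k<n. delta a (x k))) = (\<Sum>i\<in>{..<r}. h i x)"
    proof
      fix x assume x: "x \<in> PiE {0..<n} (\<lambda>_. X)"
      have e1: "F x = (\<Sum>i<r. h i x)" by (rule bspec[OF h(2) x])
      have e2: "F x = (\<Sum>a\<in>A. c a * (\<Prod>k<n. delta a (x k)))" by (rule bspec[OF assms(5) x])
      show "(\<Sum>a\<in>A. c a * (\<Prod>k<n. delta a (x k))) = (\<Sum>i\<in>{..<r}. h i x)"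
        using e1 e2 by (simp only:)
    qed
    show "finite {..<r}" by simp
    show "A \<subseteq> X" by (rule assms(3))
    show "finite X" by (rule assms(1))
    show "\<forall>a\<in>A. c a \<noteq> 0" by (rule assms(4))
    show "\<forall>i\<in>{..<r}. prank_one n (\<lambda>_. X) (h i)" using h(1) by simp
  qed
  then show "card A \<le> r" by simp
qed

end
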